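(* For $0<u<v<1$ and all $k\in\mathbb R$: (i) $(\mathcal E^c_u)'(k-)-(v-u)\le(\mathcal E^c_v)'(k-)\le(\mathcal E^c_u)'(k-)$; (ii) $(\mathcal E^c_u)'(k+)-(v-u)\le(\mathcal E^c_v)'(k+)\le(\mathcal E^c_u)'(k+)$.
   Context: Let $\mu,\nu$ be probability measures on $\mathbb R$ with finite first moments and $\mu\le_{cx}\nu$. Put $P_\eta(k)=\int(k-x)^+\eta(dx)$, $D=P_\nu-P_\mu$, and assume $\{k:D(k)>0\}$ is an interval. Let $G$ be the left-continuous quantile function of $\mu$. For $u\in(0,1)$ let $\mu_u(A)=\mu(A\cap(-\infty,G(u)))+\big(u-\mu((-\infty,G(u)))\big)\delta_{G(u)}(A)$ and $\mathcal E_u=P_\nu-P_{\mu_u}$. $f^c$ is the largest convex function lying below $f$; primes with $\pm$ denote one-sided derivatives. *)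

theory Defs
  imports "HOL-Probability.Probability"
begin

definition put_fun :: "real measure \<Rightarrow> real \<Rightarrow> real" where
  "put_fun \<eta> k = (\<integral>x. max (k - x) 0 \<partial>\<eta>)"

definition cx_le :: "real measure \<Rightarrow> real measure \<Rightarrow> bool" where
  "cx_le \<mu> \<nu> \<longleftrightarrow> (\<forall>\<phi>::real\<Rightarrow>real. convex_on UNIV \<phi> \<longrightarrow> integrable \<mu> \<phi> \<longrightarrow> integrable \<nu> \<phi> \<longrightarrow>
      (\<integral>x. \<phi> x \<partial>\<mu>) \<le> (\<integral>x. \<phi> x \<partial>\<nu>))"

definition quantile :: "real measure \<Rightarrow> real \<Rightarrow> real" where
  "quantile \<mu> u = Inf {x. measure \<mu> {..x} \<ge> u}"

definition mu_u :: "real measure \<Rightarrow> real \<Rightarrow> real measure" where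
  "mu_u \<mu> u = measure_of UNIV (sets borel)
     (\<lambda>A. emeasure \<mu> (A \<inter> {..<quantile \<mu> u})
          + ennreal (u - measure \<mu> {..<quantile \<mu> u}) * indicator A (quantile \<mu> u))"

definition E_fun :: "real measure \<Rightarrow> real measure \<Rightarrow> real \<Rightarrow> real \<Rightarrow> real" where
  "E_fun \<mu> \<nu> u k = put_fun \<nu> k - put_fun (mu_u \<mu> u) k"

definition convex_minorant :: "(real \<Rightarrow> real) \<Rightarrow> real \<Rightarrow> real" where
  "convex_minorant f x = Sup {g x | g. convex_on UNIV g \<and> (\<forall>y. g y \<le> f y)}"

definition left_deriv :: "(real \<Rightarrow> real) \<Rightarrow> real \<Rightarrow> real" where
  "left_deriv f k = Lim (at_left k) (\<lambda>h. (f h - f k) / (h - k))"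

definition right_deriv :: "(real \<Rightarrow> real) \<Rightarrow> real \<Rightarrow> real" where
  "right_deriv f k = Lim (at_right k) (\<lambda>h. (f h - f k) / (h - k))"

end

theory Submission
  imports Defs
begin


lemma slope_swap: "((a::real) - b) / (c - d) = (b - a) / (d - c)"
  by (metis minus_diff_eq minus_divide_divide)

lemma slope_mono:
  fixes \<phi> :: "real \<Rightarrow> real"
  assumes cv: "convex_on UNIV \<phi>" and h: "h1 < h2" "h1 \<noteq> k" "h2 \<noteq> k"
  shows "(\<phi> h1 - \<phi> k) / (h1 - k) \<le> (\<phi> h2 - \<phi> k) / (h2 - k)"
proof -
  consider "k < h1" | "h1 < k \<and> k < h2" | "h2 < k" using h by linarith
  then show ?thesis
  proof cases
    case 1
    from convex_on_slope_le(1)[OF cv _ _ 1 h(1)] show ?thesis by (simp add: slope_swap)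
  next
    case 2
    from convex_on_slope_le[OF cv _ _ conjunct1[OF 2] conjunct2[OF 2]] show ?thesis
      by (metis UNIV_I order_trans slope_swap)
  next
    case 3
    from convex_on_slope_le(2)[OF cv _ _ h(1) 3] show ?thesis by simp
  qed
qed

lemma right_deriv_eq:
  fixes \<phi> :: "real \<Rightarrow> real"
  assumes cv: "convex_on UNIV \<phi>"
  shows "right_deriv \<phi> k = Inf ((\<lambda>h. (\<phi> h - \<phi> k) / (h - k)) ` {k<..})"
    and "bdd_below ((\<lambda>h. (\<phi> h - \<phi> k) / (h - k)) ` {k<..})"
proof -
  define q where "q = (\<lambda>h. (\<phi> h - \<phi> k) / (h - k))"
  have qm: "q h1 \<le> q h2" if "h1 < h2" "h1 \<noteq> k" "h2 \<noteq> k" for h1 h2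
    using slope_mono[OF cv that] by (simp add: q_def)
  show bb: "bdd_below ((\<lambda>h. (\<phi> h - \<phi> k) / (h - k)) ` {k<..})"
  proof -
    have "bdd_below (q ` {k<..})"
      proof (rule bdd_belowI[of _ "q (k - 1)"])
        fix y assume "y \<in> q ` {k<..}"
        then obtain h where "h > k" "y = q h" by auto
        then show "q (k - 1) \<le> y" using qm[of "k - 1" h] by simp
      qed
    then show ?thesis by (simp add: q_def)
  qed
  define I where "I = Inf (q ` {k<..})"
  have ne: "q ` {k<..} \<noteq> {}" by auto
  have bb': "bdd_below (q ` {k<..})" using bb by (simp add: q_def)
  have "(q \<longlongrightarrow> I) (at_right k)"
  proof (rule order_tendstoI)
    fix a assume "a < I"
    have "\<forall>h>k. a < q h" using cInf_lower[OF _ bb'] \<open>a < I\<close> unfolding I_def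
      by (meson greaterThan_iff image_eqI less_le_trans)
    then show "eventually (\<lambda>h. a < q h) (at_right k)"
      unfolding eventually_at_right_field by (metis gt_ex)
  next
    fix a assume "I < a"
    then obtain y where y: "y \<in> q ` {k<..}" "y < a" using cInf_lessD[OF ne] unfolding I_def by blast
    then obtain h0 where h0: "h0 > k" "q h0 < a" by auto
    show "eventually (\<lambda>h. q h < a) (at_right k)"
      unfolding eventually_at_right_field
      using h0 qm[of _ h0] by (metis le_less_trans less_irrefl)
  qed
  then show "right_deriv \<phi> k = Inf ((\<lambda>h. (\<phi> h - \<phi> k) / (h - k)) ` {k<..})"
    unfolding right_deriv_def I_def q_def by (intro tendsto_Lim) auto
qed

lemma left_deriv_eq:
  fixes \<phi> :: "real \<Rightarrow> real"
  assumes cv: "convex_on UNIV \<phi>"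
  shows "left_deriv \<phi> k = Sup ((\<lambda>h. (\<phi> h - \<phi> k) / (h - k)) ` {..<k})"
    and "bdd_above ((\<lambda>h. (\<phi> h - \<phi> k) / (h - k)) ` {..<k})"
proof -
  define q where "q = (\<lambda>h. (\<phi> h - \<phi> k) / (h - k))"
  have qm: "q h1 \<le> q h2" if "h1 < h2" "h1 \<noteq> k" "h2 \<noteq> k" for h1 h2
    using slope_mono[OF cv that] by (simp add: q_def)
  show bb: "bdd_above ((\<lambda>h. (\<phi> h - \<phi> k) / (h - k)) ` {..<k})"
  proof -
    have "bdd_above (q ` {..<k})"
      proof (rule bdd_aboveI[of _ "q (k + 1)"])
        fix y assume "y \<in> q ` {..<k}"
        then obtain h where "h < k" "y = q h" by auto
        then show "y \<le> q (k + 1)" using qm[of h "k + 1"] by simp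
      qed
    then show ?thesis by (simp add: q_def)
  qed
  define I where "I = Sup (q ` {..<k})"
  have ne: "q ` {..<k} \<noteq> {}" by auto
  have bb': "bdd_above (q ` {..<k})" using bb by (simp add: q_def)
  have "(q \<longlongrightarrow> I) (at_left k)"
  proof (rule order_tendstoI)
    fix a assume "I < a"
    have "\<forall>h<k. q h < a" using cSup_upper[OF _ bb'] \<open>I < a\<close> unfolding I_def
      by (meson lessThan_iff image_eqI le_less_trans)
    then show "eventually (\<lambda>h. q h < a) (at_left k)"
      unfolding eventually_at_left_field by (metis lt_ex)
  next
    fix a assume "a < I"
    then obtain y where y: "y \<in> q ` {..<k}" "a < y" using less_cSupD[OF ne] unfolding I_def by blast
    then obtain h0 where h0: "h0 < k" "a < q h0" by auto
    show "eventually (\<lambda>h. a < q h) (at_left k)"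
      unfolding eventually_at_left_field
      using h0 qm[of h0] by (metis less_le_trans less_irrefl)
  qed
  then show "left_deriv \<phi> k = Sup ((\<lambda>h. (\<phi> h - \<phi> k) / (h - k)) ` {..<k})"
    unfolding left_deriv_def I_def q_def by (intro tendsto_Lim) auto
qed



lemma rd_support:
  fixes \<phi> :: "real \<Rightarrow> real"
  assumes cv: "convex_on UNIV \<phi>"
  shows "\<phi> k + right_deriv \<phi> k * (x - k) \<le> \<phi> x"
proof -
  define q where "q = (\<lambda>h. (\<phi> h - \<phi> k) / (h - k))"
  have R: "right_deriv \<phi> k = Inf (q ` {k<..})" and bb: "bdd_below (q ` {k<..})"
    using right_deriv_eq[OF cv, of k] by (simp_all add: q_def)
  consider "x > k" | "x = k" | "x < k" by linarith
  then show ?thesis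
  proof cases
    case 1
    have "right_deriv \<phi> k \<le> q x" unfolding R using 1 by (intro cInf_lower[OF _ bb]) auto
    then have "right_deriv \<phi> k * (x - k) \<le> q x * (x - k)" using 1 by (intro mult_right_mono) auto
    also have "q x * (x - k) = \<phi> x - \<phi> k" using 1 by (simp add: q_def)
    finally show ?thesis by simp
  next
    case 3
    have "q x \<le> right_deriv \<phi> k" unfolding R
    proof (rule cInf_greatest)
      show "q ` {k<..} \<noteq> {}" by auto
      fix y assume "y \<in> q ` {k<..}"
      then obtain h where "h > k" "y = q h" by auto
      then show "q x \<le> y" using slope_mono[OF cv, of x h k] 3 by (simp add: q_def)
    qed
    then have "right_deriv \<phi> k * (x - k) \<le> q x * (x - k)" using 3 by (intro mult_right_mono_neg) auto
    also have "q x * (x - k) = \<phi> x - \<phi> k" using 3 by (simp add: q_def)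
    finally show ?thesis by simp
  qed simp
qed

lemma rd_lower:
  fixes \<phi> :: "real \<Rightarrow> real"
  assumes cv: "convex_on UNIV \<phi>" and h: "\<forall>x>k. \<phi> k + m * (x - k) \<le> \<phi> x"
  shows "m \<le> right_deriv \<phi> k"
proof -
  define q where "q = (\<lambda>h. (\<phi> h - \<phi> k) / (h - k))"
  have R: "right_deriv \<phi> k = Inf (q ` {k<..})"
    using right_deriv_eq[OF cv, of k] by (simp_all add: q_def)
  show ?thesis unfolding R
  proof (rule cInf_greatest)
    show "q ` {k<..} \<noteq> {}" by auto
    fix y assume "y \<in> q ` {k<..}"
    then obtain x where x: "x > k" "y = q x" by auto
    then have "\<phi> k + m * (x - k) \<le> \<phi> x" using h by auto
    then have "m \<le> (\<phi> x - \<phi> k) / (x - k)" using x(1) by (simp add: le_divide_eq algebra_simps)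
    then show "m \<le> y" using x by (simp add: q_def)
  qed
qed

lemma ld_support:
  fixes \<phi> :: "real \<Rightarrow> real"
  assumes cv: "convex_on UNIV \<phi>"
  shows "\<phi> k + left_deriv \<phi> k * (x - k) \<le> \<phi> x"
proof -
  define q where "q = (\<lambda>h. (\<phi> h - \<phi> k) / (h - k))"
  have R: "left_deriv \<phi> k = Sup (q ` {..<k})" and bb: "bdd_above (q ` {..<k})"
    using left_deriv_eq[OF cv, of k] by (simp_all add: q_def)
  consider "x > k" | "x = k" | "x < k" by linarith
  then show ?thesis
  proof cases
    case 3
    have "q x \<le> left_deriv \<phi> k" unfolding R using 3 by (intro cSup_upper[OF _ bb]) auto
    then have "left_deriv \<phi> k * (x - k) \<le> q x * (x - k)" using 3 by (intro mult_right_mono_neg) auto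
    also have "q x * (x - k) = \<phi> x - \<phi> k" using 3 by (simp add: q_def)
    finally show ?thesis by simp
  next
    case 1
    have "left_deriv \<phi> k \<le> q x" unfolding R
    proof (rule cSup_least)
      show "q ` {..<k} \<noteq> {}" by auto
      fix y assume "y \<in> q ` {..<k}"
      then obtain h where "h < k" "y = q h" by auto
      then show "y \<le> q x" using slope_mono[OF cv, of h x k] 1 by (simp add: q_def)
    qed
    then have "left_deriv \<phi> k * (x - k) \<le> q x * (x - k)" using 1 by (intro mult_right_mono) auto
    also have "q x * (x - k) = \<phi> x - \<phi> k" using 1 by (simp add: q_def)
    finally show ?thesis by simp
  qed simp
qed

lemma ld_upper:
  fixes \<phi> :: "real \<Rightarrow> real"
  assumes cv: "convex_on UNIV \<phi>" and h: "\<forall>x<k. \<phi> k + m * (x - k) \<le> \<phi> x"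
  shows "left_deriv \<phi> k \<le> m"
proof -
  define q where "q = (\<lambda>h. (\<phi> h - \<phi> k) / (h - k))"
  have R: "left_deriv \<phi> k = Sup (q ` {..<k})"
    using left_deriv_eq[OF cv, of k] by (simp_all add: q_def)
  show ?thesis unfolding R
  proof (rule cSup_least)
    show "q ` {..<k} \<noteq> {}" by auto
    fix y assume "y \<in> q ` {..<k}"
    then obtain x where x: "x < k" "y = q x" by auto
    then have "\<phi> k + m * (x - k) \<le> \<phi> x" using h by auto
    then have "(\<phi> x - \<phi> k) / (x - k) \<le> m" using x(1) by (simp add: divide_le_eq algebra_simps)
    then show "y \<le> m" using x by (simp add: q_def)
  qed
qed

lemma affine_convex: "convex_on UNIV (\<lambda>x::real. c + m * (x - k))"
  by (rule convex_onI) (auto simp: algebra_simps)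

lemma hull_props:
  fixes f m :: "real \<Rightarrow> real"
  assumes mc: "convex_on UNIV m" and mf: "\<forall>y. m y \<le> f y"
  shows "convex_on UNIV (convex_minorant f)"
    and "\<forall>y. convex_minorant f y \<le> f y"
    and "\<And>h x. convex_on UNIV h \<Longrightarrow> \<forall>y. h y \<le> f y \<Longrightarrow> h x \<le> convex_minorant f x"
proof -
  define S where "S x = {g x | g. convex_on UNIV g \<and> (\<forall>y. g y \<le> f y)}" for x
  have cm: "convex_minorant f x = Sup (S x)" for x by (simp add: convex_minorant_def S_def)
  have ne: "S x \<noteq> {}" for x using mc mf unfolding S_def by blast
  have bb: "bdd_above (S x)" for x unfolding S_def by (rule bdd_aboveI[of _ "f x"]) auto
  show le: "\<forall>y. convex_minorant f y \<le> f y"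
  proof
    fix y show "convex_minorant f y \<le> f y" unfolding cm
      by (rule cSup_least[OF ne]) (auto simp: S_def)
  qed
  show gr: "h x \<le> convex_minorant f x" if "convex_on UNIV h" "\<forall>y. h y \<le> f y" for h x
    unfolding cm using that by (intro cSup_upper[OF _ bb]) (auto simp: S_def)
  show "convex_on UNIV (convex_minorant f)"
  proof (rule convex_onI)
    fix t x y :: real assume t: "0 < t" "t < 1"
    show "convex_minorant f ((1 - t) *\<^sub>R x + t *\<^sub>R y)
          \<le> (1 - t) * convex_minorant f x + t * convex_minorant f y"
      unfolding cm[of "(1 - t) *\<^sub>R x + t *\<^sub>R y"]
    proof (rule cSup_least[OF ne])
      fix z assume "z \<in> S ((1 - t) *\<^sub>R x + t *\<^sub>R y)"
      then obtain g where g: "convex_on UNIV g" "\<forall>y. g y \<le> f y" "z = g ((1 - t) *\<^sub>R x + t *\<^sub>R y)"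
        unfolding S_def by blast
      have "z \<le> (1 - t) * g x + t * g y" using convex_onD[OF g(1), of t x y] t g(3) by auto
      also have "\<dots> \<le> (1 - t) * convex_minorant f x + t * convex_minorant f y"
        using gr[OF g(1,2), of x] gr[OF g(1,2), of y] t
        by (intro add_mono mult_left_mono) auto
      finally show "z \<le> (1 - t) * convex_minorant f x + t * convex_minorant f y" .
    qed
  qed simp
qed



lemma small_arith:
  fixes K \<sigma> \<eta> \<epsilon> z :: real
  assumes "0 < K" "0 < \<sigma>" "\<epsilon> \<le> \<eta> * \<sigma> / (2 * K)" "\<sigma> * z < \<epsilon>"
  shows "K * z \<le> \<eta> / 2"
proof -
  have "\<sigma> * z < \<eta> * \<sigma> / (2 * K)" using assms by linarith
  then have "(\<sigma> * z) * (2 * K) < \<eta> * \<sigma>" using assms(1) by (simp add: less_divide_eq)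
  then have "\<sigma> * (2 * K * z) < \<sigma> * \<eta>" by (simp add: algebra_simps)
  then have "2 * K * z < \<eta>" using assms(2) by simp
  then show ?thesis by simp
qed

lemma core_right:
  fixes f g :: "real \<Rightarrow> real" and a B k :: real
  assumes f0: "\<forall>x. 0 \<le> f x" and g0: "\<forall>x. 0 \<le> g x"
    and dup: "\<And>x y. x \<le> y \<Longrightarrow> (g y - f y) - (g x - f x) \<le> a * (y - x)"
    and dlo: "\<And>x y. x \<le> y \<Longrightarrow> - (B * (y - x)) \<le> (g y - f y) - (g x - f x)"
    and a0: "0 \<le> a" and B0: "0 \<le> B"
  shows "right_deriv (convex_minorant g) k \<le> right_deriv (convex_minorant f) k + a"
proof (rule ccontr)
  define \<phi> where "\<phi> = convex_minorant f"
  define \<psi> where "\<psi> = convex_minorant g"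
  define d where "d x = g x - f x" for x
  have c0: "convex_on UNIV (\<lambda>x::real. 0::real)" by (simp add: convex_on_const)
  note hf = hull_props[OF c0 f0, folded \<phi>_def]
  note hg = hull_props[OF c0 g0, folded \<psi>_def]
  define s where "s = right_deriv \<psi> k"
  define t where "t = right_deriv \<phi> k"
  assume "\<not> right_deriv (convex_minorant g) k \<le> right_deriv (convex_minorant f) k + a"
  then have st: "t + a < s" by (simp add: s_def t_def \<phi>_def \<psi>_def)
  define r where "r = (t + a + s) / 2"
  have r1: "t + a < r" and r2: "r < s" using st by (auto simp: r_def)
  have supp: "\<psi> k + s * (x - k) \<le> \<psi> x" for x using rd_support[OF hg(1)] by (simp add: s_def)
  have supf: "\<phi> k + t * (x - k) \<le> \<phi> x" for x using rd_support[OF hf(1)] by (simp add: t_def)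
  have dup': "d y - d x \<le> a * (y - x)" if "x \<le> y" for x y using dup[OF that] by (simp add: d_def)
  have dlo': "- (B * (y - x)) \<le> d y - d x" if "x \<le> y" for x y using dlo[OF that] by (simp add: d_def)
  show False
  proof (cases "\<phi> k \<le> \<psi> k - d k")
    case True
    have L: "\<phi> k + (r - a) * (x - k) \<le> f x" for x
    proof (cases "k \<le> x")
      case True
      have "(r - a) * (x - k) \<le> (s - a) * (x - k)" using True r2 by (intro mult_right_mono) auto
      moreover have "(s - a) * (x - k) = s * (x - k) - a * (x - k)" by (simp add: algebra_simps)
      moreover have "f x = g x - d x" by (simp add: d_def)
      moreover note dup'[OF True] supp[of x] hg(2)[rule_format, of x] \<open>\<phi> k \<le> \<psi> k - d k\<close>
      ultimately show ?thesis by linarith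
    next
      case False
      have "(r - a) * (x - k) \<le> t * (x - k)" using False r1 by (intro mult_right_mono_neg) auto
      with supf[of x] hf(2)[rule_format, of x] show ?thesis by linarith
    qed
    have "\<forall>x>k. \<phi> k + (r - a) * (x - k) \<le> \<phi> x"
      using hf(3)[OF affine_convex] L by blast
    from rd_lower[OF hf(1) this] have "r - a \<le> t" by (simp add: t_def)
    with r1 show False by simp
  next
    case False
    define \<eta> where "\<eta> = \<phi> k + d k - \<psi> k"
    have eta: "0 < \<eta>" using False by (simp add: \<eta>_def)
    define K where "K = r - t + B"
    have K: "0 < K" using r1 a0 B0 by (simp add: K_def)
    define \<epsilon> where "\<epsilon> = min (\<eta> / 2) (\<eta> * (s - r) / (2 * K))"
    have eps: "0 < \<epsilon>" using eta K r2 by (simp add: \<epsilon>_def)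
    have N: "\<psi> k + \<epsilon> + r * (x - k) \<le> g x" for x
    proof (cases "x \<le> k")
      case True
      have "(r - (t + a)) * (x - k) \<le> 0" using True r1 by (intro mult_nonneg_nonpos) auto
      moreover have "(r - (t + a)) * (x - k) = r * (x - k) - t * (x - k) - a * (k - x) * (-1)" by (simp add: algebra_simps)
      moreover have "g x = f x + d x" by (simp add: d_def)
      moreover note dup'[OF True] supf[of x] hf(2)[rule_format, of x] \<eta>_def
      moreover have "\<epsilon> \<le> \<eta>" using eta by (simp add: \<epsilon>_def)
      ultimately show ?thesis by linarith
    next
      case False
      show ?thesis
      proof (cases "\<epsilon> \<le> (s - r) * (x - k)")
        case True
        have "s * (x - k) = r * (x - k) + (s - r) * (x - k)" by (simp add: algebra_simps)
        with True supp[of x] hg(2)[rule_format, of x] show ?thesis by linarith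
      next
        case False2: False
        have p1: "\<epsilon> \<le> \<eta> * (s - r) / (2 * K)" by (simp add: \<epsilon>_def)
        have p2: "(s - r) * (x - k) < \<epsilon>" using False2 by simp
        have "K * (x - k) \<le> \<eta> / 2"
          using small_arith[OF K _ p1 p2] r2 by simp
        moreover have "K * (x - k) = r * (x - k) - t * (x - k) + B * (x - k)" by (simp add: K_def algebra_simps)
        moreover have "g x = f x + d x" by (simp add: d_def)
        moreover have "x \<ge> k" using False by simp
        moreover note dlo'[of k x] supf[of x] hf(2)[rule_format, of x] \<eta>_def
        moreover have "\<epsilon> \<le> \<eta> / 2" by (simp add: \<epsilon>_def)
        ultimately show ?thesis by linarith
      qed
    qed
    have "\<psi> k + \<epsilon> + r * (k - k) \<le> \<psi> k"
      using hg(3)[OF affine_convex[of "\<psi> k + \<epsilon>" r k]] N by blast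
    with eps show False by simp
  qed
qed

lemma core_left:
  fixes f g :: "real \<Rightarrow> real" and a B k :: real
  assumes f0: "\<forall>x. 0 \<le> f x" and g0: "\<forall>x. 0 \<le> g x"
    and dup: "\<And>x y. x \<le> y \<Longrightarrow> (g y - f y) - (g x - f x) \<le> a * (y - x)"
    and dlo: "\<And>x y. x \<le> y \<Longrightarrow> - (B * (y - x)) \<le> (g y - f y) - (g x - f x)"
    and a0: "0 \<le> a" and B0: "0 \<le> B"
  shows "left_deriv (convex_minorant g) k \<le> left_deriv (convex_minorant f) k + a"
proof (rule ccontr)
  define \<phi> where "\<phi> = convex_minorant f"
  define \<psi> where "\<psi> = convex_minorant g"
  define d where "d x = g x - f x" for x
  have c0: "convex_on UNIV (\<lambda>x::real. 0::real)" by (simp add: convex_on_const)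
  note hf = hull_props[OF c0 f0, folded \<phi>_def]
  note hg = hull_props[OF c0 g0, folded \<psi>_def]
  define s where "s = left_deriv \<psi> k"
  define t where "t = left_deriv \<phi> k"
  assume "\<not> left_deriv (convex_minorant g) k \<le> left_deriv (convex_minorant f) k + a"
  then have st: "t + a < s" by (simp add: s_def t_def \<phi>_def \<psi>_def)
  define r where "r = (t + a + s) / 2"
  define n where "n = r - a"
  have r1: "t + a < r" and r2: "r < s" using st by (auto simp: r_def)
  have supp: "\<psi> k + s * (x - k) \<le> \<psi> x" for x using ld_support[OF hg(1)] by (simp add: s_def)
  have supf: "\<phi> k + t * (x - k) \<le> \<phi> x" for x using ld_support[OF hf(1)] by (simp add: t_def)
  have dup': "d y - d x \<le> a * (y - x)" if "x \<le> y" for x y using dup[OF that] by (simp add: d_def)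
  have dlo': "- (B * (y - x)) \<le> d y - d x" if "x \<le> y" for x y using dlo[OF that] by (simp add: d_def)
  show False
  proof (cases "\<psi> k \<le> \<phi> k + d k")
    case True
    have L: "\<psi> k + r * (x - k) \<le> g x" for x
    proof (cases "k \<le> x")
      case True
      have "r * (x - k) \<le> s * (x - k)" using True r2 by (intro mult_right_mono) auto
      with supp[of x] hg(2)[rule_format, of x] show ?thesis by linarith
    next
      case False
      then have xk: "x \<le> k" by simp
      have "(r - (t + a)) * (x - k) \<le> 0" using xk r1 by (intro mult_nonneg_nonpos) auto
      moreover have "(r - (t + a)) * (x - k) = r * (x - k) - t * (x - k) - a * (k - x) * (-1)" by (simp add: algebra_simps)
      moreover have "g x = f x + d x" by (simp add: d_def)
      moreover note dup'[OF xk] supf[of x] hf(2)[rule_format, of x] \<open>\<psi> k \<le> \<phi> k + d k\<close>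
      ultimately show ?thesis by linarith
    qed
    have "\<forall>x<k. \<psi> k + r * (x - k) \<le> \<psi> x"
      using hg(3)[OF affine_convex] L by blast
    from ld_upper[OF hg(1) this] have "s \<le> r" by (simp add: s_def)
    with r2 show False by simp
  next
    case False
    define \<eta> where "\<eta> = \<psi> k - \<phi> k - d k"
    have eta: "0 < \<eta>" using False by (simp add: \<eta>_def)
    define K where "K = s + B - n"
    have K: "0 < K" using r2 a0 B0 by (simp add: K_def n_def)
    have sig: "0 < n - t" using r1 by (simp add: n_def)
    define \<epsilon> where "\<epsilon> = min (\<eta> / 2) (\<eta> * (n - t) / (2 * K))"
    have eps: "0 < \<epsilon>" using eta K sig by (simp add: \<epsilon>_def)
    have N: "\<phi> k + \<epsilon> + n * (x - k) \<le> f x" for x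
    proof (cases "k \<le> x")
      case True
      have "n * (x - k) \<le> (s - a) * (x - k)" using True r2 by (intro mult_right_mono) (auto simp: n_def)
      moreover have "(s - a) * (x - k) = s * (x - k) - a * (x - k)" by (simp add: algebra_simps)
      moreover have "f x = g x - d x" by (simp add: d_def)
      moreover note dup'[OF True] supp[of x] hg(2)[rule_format, of x] \<eta>_def
      moreover have "\<epsilon> \<le> \<eta>" using eta by (simp add: \<epsilon>_def)
      ultimately show ?thesis by linarith
    next
      case False
      then have xk: "x \<le> k" by simp
      show ?thesis
      proof (cases "\<epsilon> \<le> (n - t) * (k - x)")
        case True
        have "t * (x - k) = n * (x - k) + (n - t) * (k - x)" by (simp add: algebra_simps)
        with True supf[of x] hf(2)[rule_format, of x] show ?thesis by linarith
      next
        case False2: False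
        have p1: "\<epsilon> \<le> \<eta> * (n - t) / (2 * K)" by (simp add: \<epsilon>_def)
        have p2: "(n - t) * (k - x) < \<epsilon>" using False2 by simp
        have "K * (k - x) \<le> \<eta> / 2"
          using small_arith[OF K sig p1 p2] by simp
        moreover have "K * (k - x) = B * (k - x) - s * (x - k) + n * (x - k)" by (simp add: K_def algebra_simps)
        moreover have "f x = g x - d x" by (simp add: d_def)
        moreover note dlo'[OF xk] supp[of x] hg(2)[rule_format, of x] \<eta>_def
        moreover have "\<epsilon> \<le> \<eta> / 2" by (simp add: \<epsilon>_def)
        ultimately show ?thesis by linarith
      qed
    qed
    have "\<phi> k + \<epsilon> + n * (k - k) \<le> \<phi> k"
      using hf(3)[OF affine_convex[of "\<phi> k + \<epsilon>" n k]] N by blast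
    with eps show False by simp
  qed
qed



context real_distribution
begin

lemma quantile_props:
  assumes u: "0 < u" "u < 1"
  shows "u \<le> measure M {..quantile M u}" "measure M {..<quantile M u} \<le> u"
    and "\<And>x. x < quantile M u \<Longrightarrow> measure M {..x} < u"
    and "{x. u \<le> measure M {..x}} \<noteq> {}" "bdd_below {x. u \<le> measure M {..x}}"
proof -
  define S where "S = {x. u \<le> measure M {..x}}"
  have G: "quantile M u = Inf S" by (simp add: quantile_def S_def)
  have "eventually (\<lambda>x. u < cdf M x) at_top"
    using order_tendstoD(1)[OF cdf_lim_at_top_prob u(2)] .
  then obtain N where "\<And>x. x \<ge> N \<Longrightarrow> u < cdf M x" by (auto simp: eventually_at_top_linorder)
  then have ne: "S \<noteq> {}" unfolding S_def cdf_def2 by (metis less_eq_real_def mem_Collect_eq order_refl empty_iff)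
  have "eventually (\<lambda>x. cdf M x < u) at_bot"
    using order_tendstoD(2)[OF cdf_lim_at_bot u(1)] .
  then obtain N' where N': "\<And>x. x \<le> N' \<Longrightarrow> cdf M x < u" by (auto simp: eventually_at_bot_linorder)
  have bb: "bdd_below S"
  proof (rule bdd_belowI[of _ N'])
    fix x assume "x \<in> S"
    then show "N' \<le> x" using N'[of x] unfolding S_def cdf_def2 by force
  qed
  show "{x. u \<le> measure M {..x}} \<noteq> {}" "bdd_below {x. u \<le> measure M {..x}}"
    using ne bb by (simp_all add: S_def)
  show lt: "measure M {..x} < u" if "x < quantile M u" for x
  proof (rule ccontr)
    assume "\<not> measure M {..x} < u"
    then have "x \<in> S" by (simp add: S_def)
    then have "quantile M u \<le> x" unfolding G by (rule cInf_lower[OF _ bb])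
    with that show False by simp
  qed
  have gt: "u \<le> cdf M x" if xg: "x > quantile M u" for x
  proof -
    obtain s where "s \<in> S" "s < x" using cInf_lessD[OF ne, of x] xg G by auto
    then show ?thesis using cdf_nondecreasing[of s x] by (simp add: S_def cdf_def2)
  qed
  have "(cdf M \<longlongrightarrow> cdf M (quantile M u)) (at_right (quantile M u))"
    using cdf_is_right_cont by (simp add: continuous_within)
  then have "u \<le> cdf M (quantile M u)"
    by (rule tendsto_lowerbound) (auto simp: eventually_at_right_field intro!: exI[of _ "quantile M u + 1"] gt)
  then show "u \<le> measure M {..quantile M u}" by (simp add: cdf_def2)
  have "eventually (\<lambda>x. cdf M x \<le> u) (at_left (quantile M u))"
    unfolding eventually_at_left_field
    by (auto intro!: exI[of _ "quantile M u - 1"] less_imp_le lt simp: cdf_def2)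
  then show "measure M {..<quantile M u} \<le> u"
    by (rule tendsto_upperbound[OF cdf_at_left]) simp
qed

lemma quantile_mono:
  assumes "0 < u" "u \<le> v" "v < 1"
  shows "quantile M u \<le> quantile M v"
proof -
  have ne: "{x. v \<le> measure M {..x}} \<noteq> {}" using quantile_props(4)[of v] assms by simp
  have bb: "bdd_below {x. u \<le> measure M {..x}}" using quantile_props(5)[of u] assms by simp
  show ?thesis unfolding quantile_def
    by (rule cInf_superset_mono[OF ne bb]) (use assms in auto)
qed

lemma mu_u_sets: "sets (mu_u M u) = sets borel" and mu_u_space: "space (mu_u M u) = UNIV"
  unfolding mu_u_def using sets.sigma_sets_eq[of borel] by (simp_all add: sets_measure_of_conv space_measure_of_conv)

lemma mu_u_emeasure:
  assumes u: "0 < u" "u < 1" and A: "A \<in> sets borel"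
  shows "emeasure (mu_u M u) A = ennreal (measure M (A \<inter> {..<quantile M u})
           + (u - measure M {..<quantile M u}) * indicator A (quantile M u))"
proof -
  define G where "G = quantile M u"
  define c where "c = u - measure M {..<G}"
  have c0: "0 \<le> c" using quantile_props(2)[OF u] by (simp add: c_def G_def)
  define f where "f A = emeasure M (A \<inter> {..<G}) + ennreal c * indicator A G" for A
  have mu: "mu_u M u = measure_of UNIV (sets borel) f"
    unfolding mu_u_def f_def c_def G_def ..
  have sa: "sigma_algebra UNIV (sets borel)"
    using sets.sigma_algebra_axioms[of borel] by simp
  have pos: "positive (sets borel) f" by (simp add: positive_def f_def)
  have ca: "countably_additive (sets borel) f"
    unfolding countably_additive_def
  proof (intro allI impI)
    fix B :: "nat \<Rightarrow> real set"
    assume B: "range B \<subseteq> sets borel" "disjoint_family B" "\<Union> (range B) \<in> sets borel"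
    have "(\<Sum>i. f (B i)) = (\<Sum>i. emeasure M (B i \<inter> {..<G})) + (\<Sum>i. ennreal c * indicator (B i) G)"
      unfolding f_def by (rule suminf_add[symmetric]) auto
    also have "(\<Sum>i. emeasure M (B i \<inter> {..<G})) = emeasure M (\<Union>i. B i \<inter> {..<G})"
      using B by (intro suminf_emeasure) (auto simp: disjoint_family_on_def)
    also have "(\<Sum>i. ennreal c * indicator (B i) G) = ennreal c * indicator (\<Union>i. B i) G"
      using suminf_indicator[OF B(2)] by simp
    finally show "(\<Sum>i. f (B i)) = f (\<Union> (range B))" by (simp add: f_def)
  qed
  have "emeasure (mu_u M u) A = f A" unfolding mu
    by (rule emeasure_measure_of_sigma[OF sa pos ca A])
  also have "\<dots> = ennreal (measure M (A \<inter> {..<G}) + c * indicator A G)"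
    using c0 by (simp add: f_def emeasure_eq_measure ennreal_mult' ennreal_plus[symmetric] flip: ennreal_indicator)
  finally show ?thesis by (simp add: G_def c_def)
qed

lemma atom_bound:
  assumes u: "0 < u" "u < 1"
  shows "u - measure M {..<quantile M u} \<le> measure M {quantile M u}"
    and "0 \<le> u - measure M {..<quantile M u}"
proof -
  define G where "G = quantile M u"
  have "{..G} = {..<G} \<union> {G}" by auto
  then have "measure M {..G} = measure M {..<G} + measure M {G}"
    using finite_measure_Union[of "{..<G}" "{G}"] by simp
  then show "u - measure M {..<quantile M u} \<le> measure M {quantile M u}"
    using quantile_props(1)[OF u] by (simp add: G_def)
  show "0 \<le> u - measure M {..<quantile M u}" using quantile_props(2)[OF u] by simp
qed

lemma split_atom:
  assumes "A \<in> sets borel" "G \<in> A" "G < H"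
  shows "measure M (A \<inter> {..<G}) + measure M {G} \<le> measure M (A \<inter> {..<H})"
proof -
  have "measure M (A \<inter> {..<G}) + measure M {G} = measure M ((A \<inter> {..<G}) \<union> {G})"
    using assms by (subst finite_measure_Union) auto
  also have "\<dots> \<le> measure M (A \<inter> {..<H})"
    using assms by (intro finite_measure_mono) auto
  finally show ?thesis .
qed

lemma split_atom':
  assumes "A \<in> sets borel" "G \<in> A"
  shows "measure M (A \<inter> {..<G}) + measure M {G} \<le> measure M A"
proof -
  have "measure M (A \<inter> {..<G}) + measure M {G} = measure M ((A \<inter> {..<G}) \<union> {G})"
    using assms by (subst finite_measure_Union) auto
  also have "\<dots> \<le> measure M A"
    using assms by (intro finite_measure_mono) auto
  finally show ?thesis .
qed

lemma mu_u_le_M: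
  assumes u: "0 < u" "u < 1"
  shows "mu_u M u \<le> M"
proof -
  have "emeasure (mu_u M u) A \<le> emeasure M A" for A
  proof (cases "A \<in> sets borel")
    case True
    define G where "G = quantile M u"
    have "measure M (A \<inter> {..<G}) + (u - measure M {..<G}) * indicator A G \<le> measure M A"
    proof (cases "G \<in> A")
      case True
      then show ?thesis using split_atom'[OF \<open>A \<in> sets borel\<close> True] atom_bound[OF u]
        by (simp add: G_def)
    next
      case False
      then show ?thesis using \<open>A \<in> sets borel\<close> by (simp add: finite_measure_mono)
    qed
    then show ?thesis using True by (simp add: mu_u_emeasure[OF u] emeasure_eq_measure G_def)
  next
    case False
    then show ?thesis by (simp add: emeasure_notin_sets mu_u_sets)
  qed
  then show ?thesis unfolding le_measure_iff by (simp add: mu_u_sets mu_u_space le_fun_def)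
qed

lemma mu_u_mono:
  assumes u: "0 < u" "u < v" "v < 1"
  shows "mu_u M u \<le> mu_u M v"
proof -
  have u': "0 < u" "u < 1" and v': "0 < v" "v < 1" using u by auto
  define Gu where "Gu = quantile M u"
  define Gv where "Gv = quantile M v"
  have GG: "Gu \<le> Gv" unfolding Gu_def Gv_def using quantile_mono[of u v] u by simp
  have "emeasure (mu_u M u) A \<le> emeasure (mu_u M v) A" for A
  proof (cases "A \<in> sets borel")
    case True
    have "measure M (A \<inter> {..<Gu}) + (u - measure M {..<Gu}) * indicator A Gu
       \<le> measure M (A \<inter> {..<Gv}) + (v - measure M {..<Gv}) * indicator A Gv"
    proof (cases "Gu = Gv")
      case True
      then show ?thesis using u by (simp add: indicator_def)
    next
      case False
      then have lt: "Gu < Gv" using GG by simp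
      have cv: "0 \<le> (v - measure M {..<Gv}) * indicator A Gv"
        using atom_bound(2)[OF v'] by (simp add: Gv_def)
      show ?thesis
      proof (cases "Gu \<in> A")
        case True
        then show ?thesis using split_atom[OF \<open>A \<in> sets borel\<close> True lt] atom_bound(1)[OF u'] cv
          by (simp add: Gu_def)
      next
        case False
        have "measure M (A \<inter> {..<Gu}) \<le> measure M (A \<inter> {..<Gv})"
          using lt \<open>A \<in> sets borel\<close> by (intro finite_measure_mono) auto
        then show ?thesis using False cv by simp
      qed
    qed
    then show ?thesis using True by (simp add: mu_u_emeasure[OF u'] mu_u_emeasure[OF v'] Gu_def Gv_def ennreal_leI)
  next
    case False
    then show ?thesis by (simp add: emeasure_notin_sets mu_u_sets)
  qed
  then show ?thesis unfolding le_measure_iff by (simp add: mu_u_sets mu_u_space le_fun_def)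
qed

lemma mu_u_total:
  assumes u: "0 < u" "u < 1"
  shows "emeasure (mu_u M u) UNIV = ennreal u" "measure (mu_u M u) UNIV = u"
proof -
  show e: "emeasure (mu_u M u) UNIV = ennreal u"
    using mu_u_emeasure[OF u, of UNIV] by simp
  then show "measure (mu_u M u) UNIV = u" using u by (simp add: measure_def)
qed

end



lemma int_mono_measure:
  fixes f :: "real \<Rightarrow> real"
  assumes sM: "sets M = sets borel" and sN: "sets N = sets borel" and le: "M \<le> N"
    and fm: "f \<in> borel_measurable borel" and f0: "\<And>x. 0 \<le> f x" and int: "integrable N f"
  shows "integrable M f" "integral\<^sup>L M f \<le> integral\<^sup>L N f"
proof -
  have mM: "f \<in> borel_measurable M" by (subst measurable_cong_sets[OF sM refl]) (rule fm)
  have mN: "f \<in> borel_measurable N" by (subst measurable_cong_sets[OF sN refl]) (rule fm)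
  have ss: "sets M = sets N" using sM sN by simp
  have le1: "(\<integral>\<^sup>+x. ennreal (norm (f x)) \<partial>M) \<le> (\<integral>\<^sup>+x. ennreal (norm (f x)) \<partial>N)"
    by (rule nn_integral_mono_measure[OF ss le])
  have fin: "(\<integral>\<^sup>+x. ennreal (norm (f x)) \<partial>N) < \<infinity>" using int by (simp add: integrable_iff_bounded)
  show "integrable M f" using le1 fin mM by (simp add: integrable_iff_bounded)
  have "integral\<^sup>L M f = enn2real (\<integral>\<^sup>+x. ennreal (f x) \<partial>M)"
    by (rule integral_eq_nn_integral[OF mM]) (simp add: f0)
  also have "\<dots> \<le> enn2real (\<integral>\<^sup>+x. ennreal (f x) \<partial>N)"
  proof (rule enn2real_mono)
    show "(\<integral>\<^sup>+x. ennreal (f x) \<partial>M) \<le> (\<integral>\<^sup>+x. ennreal (f x) \<partial>N)"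
      by (rule nn_integral_mono_measure[OF ss le])
    show "(\<integral>\<^sup>+x. ennreal (f x) \<partial>N) < top" using fin f0 by simp
  qed
  also have "\<dots> = integral\<^sup>L N f"
    by (rule integral_eq_nn_integral[OF mN, symmetric]) (simp add: f0)
  finally show "integral\<^sup>L M f \<le> integral\<^sup>L N f" .
qed

lemma put_integrable:
  assumes "prob_space M" "integrable M (\<lambda>x::real. x)"
  shows "integrable M (\<lambda>x. max (k - x) 0)"
proof -
  interpret prob_space M by fact
  have "integrable M (\<lambda>x. k - x)" using Bochner_Integration.integrable_diff[OF integrable_const[of k] assms(2)] by simp
  then show ?thesis by (intro integrable_max) auto
qed

lemma put_convex: "convex_on UNIV (\<lambda>x::real. max (k - x) 0)"
proof (rule convex_onI)
  fix t x y :: real assume t: "0 < t" "t < 1"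
  have "k - ((1 - t) *\<^sub>R x + t *\<^sub>R y) = (1 - t) * (k - x) + t * (k - y)" by (simp add: algebra_simps)
  also have "\<dots> \<le> (1 - t) * max (k - x) 0 + t * max (k - y) 0"
    using t by (intro add_mono mult_left_mono) auto
  finally show "max (k - ((1 - t) *\<^sub>R x + t *\<^sub>R y)) 0 \<le> (1 - t) * max (k - x) 0 + t * max (k - y) 0"
    using t by (simp add: mult_nonneg_nonneg)
qed simp

lemma put_meas: "(\<lambda>x::real. max (k - x) 0) \<in> borel_measurable borel" by measurable

lemma put_diff_bounds:
  fixes M N :: "real measure" and x y c :: real
  assumes sM: "sets M = sets borel" and sN: "sets N = sets borel" and le: "M \<le> N"
    and iN: "\<And>k. integrable N (\<lambda>z. max (k - z) 0)"
    and fM: "finite_measure M" and fN: "finite_measure N"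
    and mM: "measure M (space M) = a" and mN: "measure N (space N) = b" and xy: "x \<le> y"
  shows "(put_fun N y - put_fun N x) - (put_fun M y - put_fun M x) \<le> (b - a) * (y - x)"
    and "0 \<le> (put_fun N y - put_fun N x) - (put_fun M y - put_fun M x)"
proof -
  define w where "w z = max (y - z) 0 - max (x - z) 0" for z
  have wm: "w \<in> borel_measurable borel" unfolding w_def by measurable
  have w0: "0 \<le> w z" for z using xy by (simp add: w_def max_def)
  have w1: "w z \<le> y - x" for z using xy by (simp add: w_def max_def)
  have iM: "integrable M (\<lambda>z. max (k - z) 0)" for k
    by (rule int_mono_measure(1)[OF sM sN le put_meas _ iN]) simp
  have wN: "integral\<^sup>L N w = put_fun N y - put_fun N x"
    unfolding w_def put_fun_def by (rule Bochner_Integration.integral_diff[OF iN iN])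
  have wM: "integral\<^sup>L M w = put_fun M y - put_fun M x"
    unfolding w_def put_fun_def by (rule Bochner_Integration.integral_diff[OF iM iM])
  have iwN: "integrable N w" unfolding w_def by (rule Bochner_Integration.integrable_diff[OF iN iN])
  have iwM: "integrable M w" unfolding w_def by (rule Bochner_Integration.integrable_diff[OF iM iM])
  have "integral\<^sup>L M w \<le> integral\<^sup>L N w" by (rule int_mono_measure(2)[OF sM sN le wm w0 iwN])
  then show "0 \<le> (put_fun N y - put_fun N x) - (put_fun M y - put_fun M x)" using wN wM by simp
  have ivN: "integrable N (\<lambda>z. (y - x) - w z)"
    using Bochner_Integration.integrable_diff[OF finite_measure.integrable_const[OF fN] iwN] by simp
  have vm: "(\<lambda>z. (y - x) - w z) \<in> borel_measurable borel" using wm by measurable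
  have "integral\<^sup>L M (\<lambda>z. (y - x) - w z) \<le> integral\<^sup>L N (\<lambda>z. (y - x) - w z)"
    by (rule int_mono_measure(2)[OF sM sN le vm _ ivN]) (use w1 in simp)
  moreover have "integral\<^sup>L N (\<lambda>z. (y - x) - w z) = b * (y - x) - integral\<^sup>L N w"
    using Bochner_Integration.integral_diff[OF finite_measure.integrable_const[OF fN] iwN] mN by simp
  moreover have "integral\<^sup>L M (\<lambda>z. (y - x) - w z) = a * (y - x) - integral\<^sup>L M w"
    using Bochner_Integration.integral_diff[OF finite_measure.integrable_const[OF fM] iwM] mM by simp
  ultimately show "(put_fun N y - put_fun N x) - (put_fun M y - put_fun M x) \<le> (b - a) * (y - x)"
    using wN wM by (simp add: algebra_simps)
qed



theorem lemma6p4: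
  fixes \<mu> \<nu> :: "real measure" and u v k :: real
  assumes "prob_space \<mu>" and "prob_space \<nu>"
    and "sets \<mu> = sets borel" and "sets \<nu> = sets borel"
    and "integrable \<mu> (\<lambda>x. x)" and "integrable \<nu> (\<lambda>x. x)"
    and "cx_le \<mu> \<nu>"
    and "is_interval {k. put_fun \<nu> k - put_fun \<mu> k > 0}"
    and "0 < u" and "u < v" and "v < 1"
  shows "left_deriv (convex_minorant (E_fun \<mu> \<nu> u)) k - (v - u)
           \<le> left_deriv (convex_minorant (E_fun \<mu> \<nu> v)) k
       \<and> left_deriv (convex_minorant (E_fun \<mu> \<nu> v)) k
           \<le> left_deriv (convex_minorant (E_fun \<mu> \<nu> u)) k
       \<and> right_deriv (convex_minorant (E_fun \<mu> \<nu> u)) k - (v - u)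
           \<le> right_deriv (convex_minorant (E_fun \<mu> \<nu> v)) k
       \<and> right_deriv (convex_minorant (E_fun \<mu> \<nu> v)) k
           \<le> right_deriv (convex_minorant (E_fun \<mu> \<nu> u)) k"
proof -
  have rdm: "real_distribution \<mu>" using assms(1,3) by (simp add: real_distribution_def real_distribution_axioms_def)
  have rdn: "real_distribution \<nu>" using assms(2,4) by (simp add: real_distribution_def real_distribution_axioms_def)
  have u': "0 < u" "u < 1" and v': "0 < v" "v < 1" using assms(9-11) by auto
  note sU = real_distribution.mu_u_sets[OF rdm, of u]
  note sV = real_distribution.mu_u_sets[OF rdm, of v]
  have spU: "space (mu_u \<mu> u) = UNIV" by (rule real_distribution.mu_u_space[OF rdm])
  have spV: "space (mu_u \<mu> v) = UNIV" by (rule real_distribution.mu_u_space[OF rdm])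
  have le1: "mu_u \<mu> u \<le> mu_u \<mu> v" using real_distribution.mu_u_mono[OF rdm assms(9-11)] .
  have leU: "mu_u \<mu> u \<le> \<mu>" using real_distribution.mu_u_le_M[OF rdm u'] .
  have leV: "mu_u \<mu> v \<le> \<mu>" using real_distribution.mu_u_le_M[OF rdm v'] .
  have fU: "finite_measure (mu_u \<mu> u)"
    by (rule finite_measureI) (simp add: spU real_distribution.mu_u_total(1)[OF rdm u'])
  have fV: "finite_measure (mu_u \<mu> v)"
    by (rule finite_measureI) (simp add: spV real_distribution.mu_u_total(1)[OF rdm v'])
  have mU: "measure (mu_u \<mu> u) (space (mu_u \<mu> u)) = u"
    using real_distribution.mu_u_total(2)[OF rdm u'] spU by simp
  have mV: "measure (mu_u \<mu> v) (space (mu_u \<mu> v)) = v"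
    using real_distribution.mu_u_total(2)[OF rdm v'] spV by simp
  have i\<mu>: "integrable \<mu> (\<lambda>z. max (k - z) 0)" for k by (rule put_integrable[OF assms(1,5)])
  have i\<nu>: "integrable \<nu> (\<lambda>z. max (k - z) 0)" for k by (rule put_integrable[OF assms(2,6)])
  have iV: "integrable (mu_u \<mu> v) (\<lambda>z. max (k - z) 0)" for k
    by (rule int_mono_measure(1)[OF sV assms(3) leV put_meas _ i\<mu>]) simp
  define f where "f = E_fun \<mu> \<nu> u"
  define g where "g = E_fun \<mu> \<nu> v"
  have gf: "g y - f y = put_fun (mu_u \<mu> u) y - put_fun (mu_u \<mu> v) y" for y
    by (simp add: f_def g_def E_fun_def)
  have bnd: "0 \<le> (put_fun (mu_u \<mu> v) y - put_fun (mu_u \<mu> v) x) - (put_fun (mu_u \<mu> u) y - put_fun (mu_u \<mu> u) x)"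
       "(put_fun (mu_u \<mu> v) y - put_fun (mu_u \<mu> v) x) - (put_fun (mu_u \<mu> u) y - put_fun (mu_u \<mu> u) x) \<le> (v - u) * (y - x)"
    if "x \<le> y" for x y
    using put_diff_bounds[OF sU sV le1 iV fU fV mU mV that] by auto
  have dup1: "(g y - f y) - (g x - f x) \<le> 0 * (y - x)" if "x \<le> y" for x y
    using bnd[OF that] gf[of x] gf[of y] by simp
  have dlo1: "- ((v - u) * (y - x)) \<le> (g y - f y) - (g x - f x)" if "x \<le> y" for x y
    using bnd[OF that] gf[of x] gf[of y] by simp
  have dup2: "(f y - g y) - (f x - g x) \<le> (v - u) * (y - x)" if "x \<le> y" for x y
    using bnd[OF that] gf[of x] gf[of y] by simp
  have dlo2: "- (0 * (y - x)) \<le> (f y - g y) - (f x - g x)" if "x \<le> y" for x y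
    using bnd[OF that] gf[of x] gf[of y] by simp
  have E0: "0 \<le> E_fun \<mu> \<nu> w k" if w: "0 < w" "w < 1" for w k
  proof -
    note sW = real_distribution.mu_u_sets[OF rdm, of w]
    have leW: "mu_u \<mu> w \<le> \<mu>" using real_distribution.mu_u_le_M[OF rdm w] .
    have "put_fun (mu_u \<mu> w) k \<le> put_fun \<mu> k"
      unfolding put_fun_def by (rule int_mono_measure(2)[OF sW assms(3) leW put_meas _ i\<mu>]) simp
    moreover have "put_fun \<mu> k \<le> put_fun \<nu> k"
      using assms(7) put_convex[of k] i\<mu>[of k] i\<nu>[of k] unfolding cx_le_def put_fun_def by blast
    ultimately show ?thesis by (simp add: E_fun_def)
  qed
  have f0: "\<forall>x. 0 \<le> f x" using E0[OF u'] by (simp add: f_def)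
  have g0: "\<forall>x. 0 \<le> g x" using E0[OF v'] by (simp add: g_def)
  have vu: "0 \<le> v - u" using assms(10) by simp
  have R1: "right_deriv (convex_minorant g) k \<le> right_deriv (convex_minorant f) k + 0"
    by (rule core_right[OF f0 g0 dup1 dlo1 order_refl vu])
  have R2: "right_deriv (convex_minorant f) k \<le> right_deriv (convex_minorant g) k + (v - u)"
    by (rule core_right[OF g0 f0 dup2 dlo2 vu order_refl])
  have L1: "left_deriv (convex_minorant g) k \<le> left_deriv (convex_minorant f) k + 0"
    by (rule core_left[OF f0 g0 dup1 dlo1 order_refl vu])
  have L2: "left_deriv (convex_minorant f) k \<le> left_deriv (convex_minorant g) k + (v - u)"
    by (rule core_left[OF g0 f0 dup2 dlo2 vu order_refl])
  show ?thesis using R1 R2 L1 L2 by (simp add: f_def g_def)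
qed


end
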